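(* Let $q$ be a prime power, $\eta\ge0$ an integer, $(\delta_T,\delta_X)\in\mathbb{Z}\times\mathbb{N}$ with $\delta=\delta_T+\eta\delta_X\ge0$. Then: (1) the map $p$ (defined in the context) induces a bijection from the quotient set $\mathcal{P}(\delta_T,\delta_X)/\equiv$ onto $\mathcal{K}(\delta_T,\delta_X)$; (2) $\mathcal{K}(\delta_T,\delta_X)$ is a set of representatives of $\mathcal{P}(\delta_T,\delta_X)$ under $\equiv$; (3) $\Delta(\delta_T,\delta_X)=\{M(\alpha,\beta):(\alpha,\beta)\in\mathcal{K}(\delta_T,\delta_X)\}$ is a set of representatives of the set of monomials of bidegree $(\delta_T,\delta_X)$ under $\equiv$.
   Context: $R=\mathbb{F}_q[T_1,T_2,X_1,X_2]$; the bidegree of $T_1^{c_1}T_2^{c_2}X_1^{d_1}X_2^{d_2}$ is $(c_1+c_2-\eta d_1,d_1+d_2)$. The Hirzebruch surface $\mathcal{H}_\eta$ is the quotient of $(\mathbb{A}^2\setminus\{0\})^2$ by $\mathbb{G}_m^2$ acting by $(\lambda,\mu)\cdot(t_1,t_2,x_1,x_2)=(\lambda t_1,\lambda t_2,\mu\lambda^{-\eta}x_1,\mu x_2)$; each $\mathbb{F}_q$-point has a unique representative of the form $(1,a,1,b)$, $(0,1,1,b)$, $(1,a,0,1)$ or $(0,1,0,1)$ ($a,b\in\mathbb{F}_q$), where polynomials are evaluated. Two monomials of bidegree $(\delta_T,\delta_X)$ are equivalent ($\equiv$) if they take the same value at every $\mathbb{F}_q$-point. $\mathcal{P}(\delta_T,\delta_X)=\{(a,b)\in\mathbb{N}^2: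 a\le\delta_X,\ \eta a+b\le\delta\}$; for $(d_2,c_2)\in\mathcal{P}(\delta_T,\delta_X)$, $M(d_2,c_2)=T_1^{\delta-\eta d_2-c_2}T_2^{c_2}X_1^{\delta_X-d_2}X_2^{d_2}$ (a bijection onto the monomials of bidegree $(\delta_T,\delta_X)$), and $(d_2,c_2)\equiv(d'_2,c'_2)$ iff $M(d_2,c_2)\equiv M(d'_2,c'_2)$. $A=\delta_X$ if $\delta_T\ge0$, $A=\delta/\eta$ if $\delta_T<0$. $\mathcal{A}_X=\{\alpha\in\mathbb{N}:\alpha\le\min(\lfloor A\rfloor,q-1)\}\cup(\{A\}\cap\mathbb{N})$, $\mathcal{K}(\delta_T,\delta_X)=\{(\alpha,\beta)\in\mathbb{N}^2:\alpha\in\mathcal{A}_X,\ \beta\le\min(\delta-\eta\alpha,q)-1\text{ or }\beta=\delta-\eta\alpha\}$. The map $p:\mathcal{P}(\delta_T,\delta_X)\to\mathcal{P}(\delta_T,\delta_X)$, $(d_2,c_2)\mapsto(d'_2,c'_2)$: $d'_2=d_2$ if $d_2=0$ or $d_2=A$, otherwise $d'_2$ is the element of $\{1,\dots,q-1\}$ congruent to $d_2$ mod $q-1$; $c'_2=0$ if $c_2=0$; $c'_2=\delta-\eta d'_2$ if $c_2=\delta-\eta d_2$; otherwise $c'_2$ is the element of $\{1,\dots,q-1\}$ congruent to $c_2$ mod $q-1$. *)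

theory Defs
  imports Complex_Main "HOL-Library.Cardinality"
begin

text \<open>The field F_q is modelled by a finite field type 'a, q = CARD('a).
 A monomial T1^c1 T2^c2 X1^d1 X2^d2 is represented by its exponent tuple (c1,c2,d1,d2).\<close>

type_synonym expo = "nat \<times> nat \<times> nat \<times> nat"

definition hdelta :: "nat \<Rightarrow> int \<Rightarrow> nat \<Rightarrow> int" where
  "hdelta \<eta> \<delta>T \<delta>X = \<delta>T + int \<eta> * int \<delta>X"

definition bideg_monos :: "nat \<Rightarrow> int \<Rightarrow> nat \<Rightarrow> expo set" where
  "bideg_monos \<eta> \<delta>T \<delta>X = {(c1,c2,d1,d2). int c1 + int c2 - int \<eta> * int d1 = \<delta>T \<and> d1 + d2 = \<delta>X}"

text \<open>Canonical representatives of the F_q-points of the Hirzebruch surface.\<close>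
definition hpoints :: "('a::field \<times> 'a \<times> 'a \<times> 'a) set" where
  "hpoints = {(1,a,1,b) | a b. True} \<union> {(0,1,1,b) | b. True} \<union> {(1,a,0,1) | a. True} \<union> {(0,1,0,1)}"

definition mon_eval :: "('a::field \<times> 'a \<times> 'a \<times> 'a) \<Rightarrow> expo \<Rightarrow> 'a" where
  "mon_eval pt m = (case pt of (t1,t2,x1,x2) \<Rightarrow> case m of (c1,c2,d1,d2) \<Rightarrow>
      t1 ^ c1 * t2 ^ c2 * x1 ^ d1 * x2 ^ d2)"

definition mequiv :: "'a::field itself \<Rightarrow> expo \<Rightarrow> expo \<Rightarrow> bool" where
  "mequiv _ m m' \<longleftrightarrow> (\<forall>pt \<in> (hpoints :: ('a \<times> 'a \<times> 'a \<times> 'a) set). mon_eval pt m = mon_eval pt m')"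

definition Pset :: "nat \<Rightarrow> int \<Rightarrow> nat \<Rightarrow> (nat \<times> nat) set" where
  "Pset \<eta> \<delta>T \<delta>X = {(a,b). a \<le> \<delta>X \<and> int \<eta> * int a + int b \<le> hdelta \<eta> \<delta>T \<delta>X}"

definition Mmon :: "nat \<Rightarrow> int \<Rightarrow> nat \<Rightarrow> nat \<times> nat \<Rightarrow> expo" where
  "Mmon \<eta> \<delta>T \<delta>X x = (case x of (d2,c2) \<Rightarrow>
     (nat (hdelta \<eta> \<delta>T \<delta>X - int \<eta> * int d2 - int c2), c2, \<delta>X - d2, d2))"

definition Pequiv :: "'a::field itself \<Rightarrow> nat \<Rightarrow> int \<Rightarrow> nat \<Rightarrow> nat \<times> nat \<Rightarrow> nat \<times> nat \<Rightarrow> bool" where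
  "Pequiv ty \<eta> \<delta>T \<delta>X x y \<longleftrightarrow> mequiv ty (Mmon \<eta> \<delta>T \<delta>X x) (Mmon \<eta> \<delta>T \<delta>X y)"

definition Arat :: "nat \<Rightarrow> int \<Rightarrow> nat \<Rightarrow> real" where
  "Arat \<eta> \<delta>T \<delta>X = (if \<delta>T \<ge> 0 then real \<delta>X else real_of_int (hdelta \<eta> \<delta>T \<delta>X) / real \<eta>)"

definition AX :: "nat \<Rightarrow> nat \<Rightarrow> int \<Rightarrow> nat \<Rightarrow> nat set" where
  "AX q \<eta> \<delta>T \<delta>X = {\<alpha>. int \<alpha> \<le> min \<lfloor>Arat \<eta> \<delta>T \<delta>X\<rfloor> (int q - 1)} \<union> {\<alpha>. real \<alpha> = Arat \<eta> \<delta>T \<delta>X}"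

definition Kset :: "nat \<Rightarrow> nat \<Rightarrow> int \<Rightarrow> nat \<Rightarrow> (nat \<times> nat) set" where
  "Kset q \<eta> \<delta>T \<delta>X = {(\<alpha>,\<beta>). \<alpha> \<in> AX q \<eta> \<delta>T \<delta>X \<and>
      (int \<beta> \<le> min (hdelta \<eta> \<delta>T \<delta>X - int \<eta> * int \<alpha>) (int q) - 1
       \<or> int \<beta> = hdelta \<eta> \<delta>T \<delta>X - int \<eta> * int \<alpha>)}"

definition redmod :: "nat \<Rightarrow> nat \<Rightarrow> nat" where
  "redmod q n = (THE x. x \<in> {1..q-1} \<and> x mod (q-1) = n mod (q-1))"

definition pmap :: "nat \<Rightarrow> nat \<Rightarrow> int \<Rightarrow> nat \<Rightarrow> nat \<times> nat \<Rightarrow> nat \<times> nat" where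
  "pmap q \<eta> \<delta>T \<delta>X x = (case x of (d2,c2) \<Rightarrow>
     let d2' = (if d2 = 0 \<or> real d2 = Arat \<eta> \<delta>T \<delta>X then d2 else redmod q d2);
         c2' = (if c2 = 0 then 0
                else if int c2 = hdelta \<eta> \<delta>T \<delta>X - int \<eta> * int d2
                     then nat (hdelta \<eta> \<delta>T \<delta>X - int \<eta> * int d2')
                else redmod q c2)
     in (d2', c2'))"

definition Prel :: "'a::field itself \<Rightarrow> nat \<Rightarrow> int \<Rightarrow> nat \<Rightarrow> ((nat \<times> nat) \<times> (nat \<times> nat)) set" where
  "Prel ty \<eta> \<delta>T \<delta>X = {(x,y). x \<in> Pset \<eta> \<delta>T \<delta>X \<and> y \<in> Pset \<eta> \<delta>T \<delta>X \<and> Pequiv ty \<eta> \<delta>T \<delta>X x y}"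

definition Delta :: "nat \<Rightarrow> nat \<Rightarrow> int \<Rightarrow> nat \<Rightarrow> expo set" where
  "Delta q \<eta> \<delta>T \<delta>X = Mmon \<eta> \<delta>T \<delta>X ` Kset q \<eta> \<delta>T \<delta>X"

end

theory Submission
  imports Defs "HOL-Computational_Algebra.Polynomial"
begin

lemma card_ge2: "CARD('a::{finite,field}) \<ge> 2"
proof -
  have "{0::'a, 1} \<subseteq> UNIV" by simp
  hence "card {0::'a,1} \<le> CARD('a)" by (intro card_mono) auto
  thus ?thesis by simp
qed

lemma fermat:
  fixes a :: "'a::{finite,field}"
  assumes "a \<noteq> 0"
  shows "a ^ (CARD('a) - 1) = 1"
proof -
  define S where "S = (UNIV - {0::'a})"
  have cS: "card S = CARD('a) - 1" unfolding S_def by (simp add: card_Diff_subset)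
  have bij: "bij_betw (\<lambda>x. a * x) S S"
    unfolding S_def bij_betw_def inj_on_def
  proof (intro conjI ballI impI)
    show "(*) a ` (UNIV - {0}) = UNIV - {0}"
    proof
      show "(*) a ` (UNIV - {0}) \<subseteq> UNIV - {0}" using assms by auto
      show "UNIV - {0} \<subseteq> (*) a ` (UNIV - {0})"
      proof
        fix y assume "y \<in> UNIV - {0::'a}"
        hence "y = a * (y / a)" "y / a \<in> UNIV - {0}" using assms by auto
        thus "y \<in> (*) a ` (UNIV - {0})" by blast
      qed
    qed
  qed (use assms in auto)
  have "prod id S = prod ((\<lambda>x. a * x)) S"
    using prod.reindex_bij_betw[OF bij, of id] by simp
  also have "\<dots> = a ^ card S * prod id S" by (simp add: prod.distrib)
  finally have "prod id S = a ^ card S * prod id S" .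
  moreover have "prod id S \<noteq> 0" unfolding S_def by (simp add: prod_zero_iff)
  ultimately show ?thesis using cS by simp
qed

lemma pow_inj:
  fixes dummy :: "'a::{finite,field} itself"
  assumes "1 \<le> n" "n < m" "m \<le> CARD('a) - 1" and eq: "\<forall>a::'a. a ^ n = a ^ m"
  shows False
proof -
  define s where "s = m - n"
  have s: "0 < s" "s < CARD('a) - 1" using assms unfolding s_def by auto
  have roots: "\<forall>a::'a. a \<noteq> 0 \<longrightarrow> a ^ s = 1"
  proof (intro allI impI)
    fix a :: 'a assume "a \<noteq> 0"
    have "n + s = m" using assms by (simp add: s_def)
    hence "a ^ n * a ^ s = a ^ m" by (metis power_add)
    also have "\<dots> = a ^ n * 1" using eq by simp
    finally have "a ^ n * a ^ s = a ^ n * 1" .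
    thus "a ^ s = 1" using \<open>a \<noteq> 0\<close> by simp
  qed
  define p :: "'a poly" where "p = monom 1 s - 1"
  have dp: "degree p = s" unfolding p_def using s
    by (simp add: degree_monom_eq degree_add_eq_left diff_conv_add_uminus del: add_uminus_conv_diff)
  hence "p \<noteq> 0" using s by auto
  have "UNIV - {0::'a} \<subseteq> {x. poly p x = 0}" using roots by (auto simp: p_def poly_monom)
  hence "card (UNIV - {0::'a}) \<le> card {x. poly p x = 0}" by (intro card_mono) auto
  also have "\<dots> \<le> s" using card_poly_roots_bound[OF \<open>p \<noteq> 0\<close>] dp by simp
  finally show False using s by (simp add: card_Diff_subset)
qed

lemma redmod_explicit:
  assumes "q \<ge> 2"
  shows "redmod q n = (if n mod (q-1) = 0 then q-1 else n mod (q-1))"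
  unfolding redmod_def
proof (rule the_equality)
  show "(if n mod (q-1) = 0 then q-1 else n mod (q-1)) \<in> {1..q - 1} \<and>
    (if n mod (q-1) = 0 then q-1 else n mod (q-1)) mod (q - 1) = n mod (q - 1)"
    using assms by (auto simp: less_imp_le_nat)
  fix x assume x: "x \<in> {1..q - 1} \<and> x mod (q - 1) = n mod (q - 1)"
  show "x = (if n mod (q-1) = 0 then q-1 else n mod (q-1))"
  proof (cases "x = q - 1")
    case True thus ?thesis using x by auto
  next
    case False
    hence "x < q - 1" using x by auto
    hence "x mod (q-1) = x" by simp
    thus ?thesis using x False by auto
  qed
qed

lemma redmod_props:
  assumes "q \<ge> 2"
  shows "1 \<le> redmod q n" "redmod q n \<le> q - 1" "redmod q n mod (q-1) = n mod (q-1)"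
  using assms by (auto simp: redmod_explicit less_imp_le_nat)

lemma redmod_le: assumes "q \<ge> 2" "1 \<le> n" shows "redmod q n \<le> n"
proof (cases "n mod (q-1) = 0")
  case True
  hence "(q-1) dvd n" by auto
  hence "q - 1 \<le> n" using assms by (intro dvd_imp_le) auto
  thus ?thesis using True assms by (simp add: redmod_explicit)
qed (use assms in \<open>simp add: redmod_explicit\<close>)

lemma redmod_id: assumes "q \<ge> 2" "1 \<le> n" "n \<le> q - 1" shows "redmod q n = n"
proof (cases "n = q - 1")
  case True thus ?thesis using assms by (simp add: redmod_explicit)
next
  case False
  hence "n mod (q-1) = n" using assms by simp
  thus ?thesis using assms by (simp add: redmod_explicit)
qed

lemma redmod_eq_iff: assumes "q \<ge> 2" shows "redmod q n = redmod q m \<longleftrightarrow> n mod (q-1) = m mod (q-1)"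
proof
  assume "redmod q n = redmod q m"
  hence "redmod q n mod (q-1) = redmod q m mod (q-1)" by simp
  thus "n mod (q-1) = m mod (q-1)" using redmod_props(3)[OF assms] by simp
qed (simp add: redmod_explicit[OF assms])

lemma redmod_dvd: assumes "q \<ge> 2" "1 \<le> n" shows "(q - 1) dvd (n - redmod q n)"
proof -
  have "n mod (q-1) = redmod q n mod (q-1)" using redmod_props(3)[OF assms(1)] by simp
  thus ?thesis using mod_eq_dvd_iff_nat[OF redmod_le[OF assms], of "q-1"] by blast
qed

lemma pow_red:
  fixes a :: "'a::{finite,field}"
  assumes "1 \<le> n"
  shows "a ^ n = a ^ redmod CARD('a) n"
proof (cases "a = 0")
  case True
  thus ?thesis using assms redmod_props(1)[OF card_ge2[where 'a='a], of n] by (simp add: power_0_left)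
next
  case False
  define k where "k = CARD('a) - 1"
  have f: "a ^ k = 1" using fermat[OF False] by (simp add: k_def)
  have "a ^ n = a ^ (k * (n div k) + n mod k)" by simp
  also have "\<dots> = (a ^ k) ^ (n div k) * a ^ (n mod k)" by (simp only: power_add power_mult)
  also have "\<dots> = a ^ (n mod k)" by (simp add: f)
  finally have e: "a ^ n = a ^ (n mod k)" .
  show ?thesis
    using e f card_ge2[where 'a='a] by (simp add: redmod_explicit k_def)
qed

definition sig :: "nat \<Rightarrow> nat \<Rightarrow> nat" where
  "sig q n = (if n = 0 then 0 else redmod q n)"

lemma pow_eq_iff:
  "(\<forall>a::'a::{finite,field}. a ^ n = a ^ m) \<longleftrightarrow> sig CARD('a) n = sig CARD('a) m"
proof
  have q2: "CARD('a) \<ge> 2" by (rule card_ge2)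
  assume H: "\<forall>a::'a. a ^ n = a ^ m"
  have z: "n = 0 \<longleftrightarrow> m = 0" using H[rule_format, of 0] by (auto simp: power_0_left split: if_splits)
  show "sig CARD('a) n = sig CARD('a) m"
  proof (cases "n = 0")
    case True thus ?thesis using z by (simp add: sig_def)
  next
    case False
    hence n1: "1 \<le> n" "1 \<le> m" using z by auto
    have H2: "\<forall>a::'a. a ^ redmod CARD('a) n = a ^ redmod CARD('a) m"
    proof
      fix a :: 'a
      have "a ^ redmod CARD('a) n = a ^ n" using pow_red[where 'a='a, OF n1(1)] by simp
      also have "\<dots> = a ^ m" using H by simp
      also have "\<dots> = a ^ redmod CARD('a) m" using pow_red[where 'a='a, OF n1(2)] by simp
      finally show "a ^ redmod CARD('a) n = a ^ redmod CARD('a) m" .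
    qed
    have "redmod CARD('a) n = redmod CARD('a) m"
    proof (rule ccontr)
      assume ne: "redmod CARD('a) n \<noteq> redmod CARD('a) m"
      show False
      proof (cases "redmod CARD('a) n < redmod CARD('a) m")
        case True
        show False by (rule pow_inj[where 'a='a, OF _ True _ H2]) (use redmod_props[OF q2] in auto)
      next
        case False
        hence lt: "redmod CARD('a) m < redmod CARD('a) n" using ne by simp
        show False by (rule pow_inj[where 'a='a, OF _ lt]) (use redmod_props[OF q2] H2 in auto)
      qed
    qed
    thus ?thesis using False z by (simp add: sig_def)
  qed
next
  assume S: "sig CARD('a) n = sig CARD('a) m"
  show "\<forall>a::'a. a ^ n = a ^ m"
  proof (cases "n = 0")
    case True thus ?thesis using S redmod_props(1)[OF card_ge2[where 'a='a], of m]
      by (auto simp: sig_def split: if_splits)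
  next
    case False
    hence "m \<noteq> 0" using S redmod_props(1)[OF card_ge2[where 'a='a], of n]
      by (auto simp: sig_def split: if_splits)
    hence "redmod CARD('a) n = redmod CARD('a) m" using S False by (simp add: sig_def)
    thus ?thesis using pow_red[where 'a='a, of n] pow_red[where 'a='a, of m] False \<open>m \<noteq> 0\<close>
      by simp
  qed
qed

lemma zero_pow_eq: "((0::'a::field) ^ n = 0 ^ m) \<longleftrightarrow> (n = 0 \<longleftrightarrow> m = 0)"
  by (simp add: power_0_left)

lemma mequiv_iff:
  "mequiv TYPE('a::{finite,field}) (c1,c2,d1,d2) (c1',c2',d1',d2') \<longleftrightarrow>
    (c1 = 0 \<longleftrightarrow> c1' = 0) \<and> (d1 = 0 \<longleftrightarrow> d1' = 0) \<and>
    sig CARD('a) c2 = sig CARD('a) c2' \<and> sig CARD('a) d2 = sig CARD('a) d2'"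
proof
  assume H: "mequiv TYPE('a) (c1,c2,d1,d2) (c1',c2',d1',d2')"
  have ev: "\<And>pt. pt \<in> (hpoints :: ('a \<times> 'a \<times> 'a \<times> 'a) set) \<Longrightarrow>
     mon_eval pt (c1,c2,d1,d2) = mon_eval pt (c1',c2',d1',d2')"
    using H unfolding mequiv_def by blast
  have p1: "\<And>a b::'a. (1,a,1,b) \<in> hpoints" by (auto simp: hpoints_def)
  have p2: "((0::'a),1,1,1) \<in> hpoints" by (auto simp: hpoints_def)
  have p3: "((1::'a),1,0,1) \<in> hpoints" by (auto simp: hpoints_def)
  have "\<forall>a::'a. a ^ c2 = a ^ c2'" using ev[OF p1[of _ 1]] by (simp add: mon_eval_def)
  moreover have "\<forall>a::'a. a ^ d2 = a ^ d2'" using ev[OF p1[of 1]] by (simp add: mon_eval_def)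
  moreover have "(0::'a) ^ c1 = 0 ^ c1'" using ev[OF p2] by (simp add: mon_eval_def)
  moreover have "(0::'a) ^ d1 = 0 ^ d1'" using ev[OF p3] by (simp add: mon_eval_def)
  ultimately show "(c1 = 0 \<longleftrightarrow> c1' = 0) \<and> (d1 = 0 \<longleftrightarrow> d1' = 0) \<and>
    sig CARD('a) c2 = sig CARD('a) c2' \<and> sig CARD('a) d2 = sig CARD('a) d2'"
    using pow_eq_iff[where 'a='a] zero_pow_eq[where 'a='a] by metis
next
  assume H: "(c1 = 0 \<longleftrightarrow> c1' = 0) \<and> (d1 = 0 \<longleftrightarrow> d1' = 0) \<and>
    sig CARD('a) c2 = sig CARD('a) c2' \<and> sig CARD('a) d2 = sig CARD('a) d2'"
  hence a: "\<And>a::'a. a ^ c2 = a ^ c2'" "\<And>a::'a. a ^ d2 = a ^ d2'"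
    and b: "(0::'a) ^ c1 = 0 ^ c1'" "(0::'a) ^ d1 = 0 ^ d1'"
    using pow_eq_iff[where 'a='a] zero_pow_eq[where 'a='a] by metis+
  show "mequiv TYPE('a) (c1,c2,d1,d2) (c1',c2',d1',d2')"
    unfolding mequiv_def hpoints_def using a b by (auto simp: mon_eval_def)
qed

lemma Pset_iff: "(a,b) \<in> Pset \<eta> \<delta>T \<delta>X \<longleftrightarrow> a \<le> \<delta>X \<and> int \<eta> * int a + int b \<le> hdelta \<eta> \<delta>T \<delta>X"
  by (simp add: Pset_def)

lemma Mmon_eq: "Mmon \<eta> \<delta>T \<delta>X (a,b) = (nat (hdelta \<eta> \<delta>T \<delta>X - int \<eta> * int a - int b), b, \<delta>X - a, a)"
  by (simp add: Mmon_def)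

lemma Pequiv_iff:
  assumes "(a,b) \<in> Pset \<eta> \<delta>T \<delta>X" "(a',b') \<in> Pset \<eta> \<delta>T \<delta>X"
  shows "Pequiv TYPE('a::{finite,field}) \<eta> \<delta>T \<delta>X (a,b) (a',b') \<longleftrightarrow>
    ((hdelta \<eta> \<delta>T \<delta>X - int \<eta> * int a - int b = 0) \<longleftrightarrow> (hdelta \<eta> \<delta>T \<delta>X - int \<eta> * int a' - int b' = 0))
    \<and> (a = \<delta>X \<longleftrightarrow> a' = \<delta>X) \<and> sig CARD('a) b = sig CARD('a) b' \<and> sig CARD('a) a = sig CARD('a) a'"
  using assms unfolding Pequiv_def Mmon_eq mequiv_iff Pset_iff by auto

context
  fixes \<eta> :: nat and \<delta>T :: int and \<delta>X :: nat
  assumes D0: "\<delta>T + int \<eta> * int \<delta>X \<ge> 0"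
begin

lemma Dge: "hdelta \<eta> \<delta>T \<delta>X \<ge> 0" using D0 by (simp add: hdelta_def)

lemma neg_cases:
  assumes "\<delta>T < 0"
  shows "\<eta> > 0" "Arat \<eta> \<delta>T \<delta>X = real_of_int (hdelta \<eta> \<delta>T \<delta>X) / real \<eta>"
proof -
  show "\<eta> > 0" using D0 assms by (cases "\<eta> = 0") auto
  show "Arat \<eta> \<delta>T \<delta>X = real_of_int (hdelta \<eta> \<delta>T \<delta>X) / real \<eta>"
    using assms by (simp add: Arat_def)
qed

lemma A_nonneg: "Arat \<eta> \<delta>T \<delta>X \<ge> 0"
  using Dge by (auto simp: Arat_def)

lemma A_le: "Arat \<eta> \<delta>T \<delta>X \<le> real \<delta>X"
proof (cases "\<delta>T \<ge> 0")
  case True thus ?thesis by (simp add: Arat_def)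
next
  case False
  hence e: "\<eta> > 0" using neg_cases by auto
  have "real_of_int (hdelta \<eta> \<delta>T \<delta>X) \<le> real \<eta> * real \<delta>X"
    using False by (simp add: hdelta_def)
  thus ?thesis using False e by (simp add: Arat_def pos_divide_le_eq mult.commute)
qed

lemma A_bound:
  assumes "(a,b) \<in> Pset \<eta> \<delta>T \<delta>X"
  shows "real a \<le> Arat \<eta> \<delta>T \<delta>X"
proof (cases "\<delta>T \<ge> 0")
  case True thus ?thesis using assms by (simp add: Arat_def Pset_iff)
next
  case False
  hence e: "\<eta> > 0" using neg_cases by auto
  have "int \<eta> * int a \<le> hdelta \<eta> \<delta>T \<delta>X" using assms by (simp add: Pset_iff)
  hence "real_of_int (int \<eta> * int a) \<le> real_of_int (hdelta \<eta> \<delta>T \<delta>X)"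
    by (simp only: of_int_le_iff)
  hence "real \<eta> * real a \<le> real_of_int (hdelta \<eta> \<delta>T \<delta>X)" by simp
  thus ?thesis using False e by (simp add: Arat_def pos_le_divide_eq mult.commute)
qed

lemma lt_dX:
  assumes "\<delta>T < 0" "(a,b) \<in> Pset \<eta> \<delta>T \<delta>X"
  shows "a < \<delta>X"
proof -
  have "int \<eta> * int a < int \<eta> * int \<delta>X" using assms by (simp add: Pset_iff hdelta_def)
  thus ?thesis using neg_cases(1)[OF assms(1)] by (simp add: mult_less_cancel_left)
qed

lemma isA:
  assumes "(a,b) \<in> Pset \<eta> \<delta>T \<delta>X"
  shows "real a = Arat \<eta> \<delta>T \<delta>X \<longleftrightarrow> (if \<delta>T \<ge> 0 then a = \<delta>X
            else (hdelta \<eta> \<delta>T \<delta>X - int \<eta> * int a - int b = 0 \<and> b = 0))"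
proof (cases "\<delta>T \<ge> 0")
  case True thus ?thesis by (simp add: Arat_def)
next
  case False
  hence e: "\<eta> > 0" using neg_cases by auto
  have "real a = Arat \<eta> \<delta>T \<delta>X \<longleftrightarrow> real \<eta> * real a = real_of_int (hdelta \<eta> \<delta>T \<delta>X)"
    using False e by (simp add: Arat_def eq_divide_eq mult.commute)
  also have "\<dots> \<longleftrightarrow> real_of_int (int \<eta> * int a) = real_of_int (hdelta \<eta> \<delta>T \<delta>X)"
    by simp
  also have "\<dots> \<longleftrightarrow> int \<eta> * int a = hdelta \<eta> \<delta>T \<delta>X"
    by (simp only: of_int_eq_iff)
  also have "\<dots> \<longleftrightarrow> (hdelta \<eta> \<delta>T \<delta>X - int \<eta> * int a - int b = 0 \<and> b = 0)"
    using assms by (auto simp: Pset_iff)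
  finally show ?thesis using False by simp
qed

lemma pmap_simp: "pmap q \<eta> \<delta>T \<delta>X (a,b) =
   (let d' = (if a = 0 \<or> real a = Arat \<eta> \<delta>T \<delta>X then a else redmod q a)
    in (d', if b = 0 then 0 else if int b = hdelta \<eta> \<delta>T \<delta>X - int \<eta> * int a
      then nat (hdelta \<eta> \<delta>T \<delta>X - int \<eta> * int d') else redmod q b))"
  by (simp add: pmap_def Let_def)

lemma dprime_le:
  assumes "q \<ge> 2"
  shows "(if a = 0 \<or> real a = Arat \<eta> \<delta>T \<delta>X then a else redmod q a) \<le> a"
  using redmod_le[OF assms, of a] by auto

lemma P1:
  assumes q2: "q \<ge> 2" and x: "(a,b) \<in> Pset \<eta> \<delta>T \<delta>X"
  shows "pmap q \<eta> \<delta>T \<delta>X (a,b) \<in> Kset q \<eta> \<delta>T \<delta>X"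
proof -
  define D where "D = hdelta \<eta> \<delta>T \<delta>X"
  define A where "A = Arat \<eta> \<delta>T \<delta>X"
  define d' where "d' = (if a = 0 \<or> real a = A then a else redmod q a)"
  define c' where "c' = (if b = 0 then 0 else if int b = D - int \<eta> * int a
      then nat (D - int \<eta> * int d') else redmod q b)"
  have pm: "pmap q \<eta> \<delta>T \<delta>X (a,b) = (d', c')"
    by (simp add: pmap_simp d'_def c'_def D_def A_def Let_def)
  have dle: "d' \<le> a" using dprime_le[OF q2] by (simp add: d'_def A_def)
  have xa: "int \<eta> * int a + int b \<le> D" "a \<le> \<delta>X" using x by (auto simp: Pset_iff D_def)
  have Dd: "D - int \<eta> * int d' \<ge> D - int \<eta> * int a" using dle by (simp add: mult_left_mono)
  have aA: "real a \<le> A" using A_bound[OF x] by (simp add: A_def)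
  have A0: "A \<ge> 0" using A_nonneg by (simp add: A_def)
  have dAX: "d' \<in> AX q \<eta> \<delta>T \<delta>X"
  proof (cases "a = 0 \<or> real a = A")
    case True
    thus ?thesis
    proof
      assume "a = 0" thus ?thesis using True A0 q2 by (simp add: d'_def AX_def A_def)
    next
      assume "real a = A" thus ?thesis by (simp add: d'_def AX_def A_def)
    qed
  next
    case False
    hence d'e: "d' = redmod q a" by (simp add: d'_def)
    have "real d' \<le> A" using dle aA by linarith
    hence "int d' \<le> \<lfloor>A\<rfloor>" by (simp add: le_floor_iff)
    moreover have "d' < q" using redmod_props(2)[OF q2, of a] d'e q2 by simp
    ultimately show ?thesis using q2 by (simp add: AX_def A_def)
  qed
  have cK: "int c' \<le> min (D - int \<eta> * int d') (int q) - 1 \<or> int c' = D - int \<eta> * int d'"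
  proof (cases "b = 0")
    case True thus ?thesis using q2 Dd xa by (auto simp: c'_def)
  next
    case b0: False
    show ?thesis
    proof (cases "int b = D - int \<eta> * int a")
      case True thus ?thesis using b0 Dd by (simp add: c'_def)
    next
      case False
      hence c'e: "c' = redmod q b" using b0 by (simp add: c'_def)
      have "c' \<le> b" using redmod_le[OF q2, of b] b0 c'e by simp
      moreover have "int b < D - int \<eta> * int a" using False xa by simp
      moreover have "c' \<le> q - 1" using redmod_props(2)[OF q2] c'e by simp
      ultimately show ?thesis using Dd q2 by auto
    qed
  qed
  show ?thesis unfolding pm Kset_def using dAX cK by (simp add: D_def)
qed

lemma P4:
  assumes q2: "q \<ge> 2" and k: "(a,b) \<in> Kset q \<eta> \<delta>T \<delta>X"
  shows "(a,b) \<in> Pset \<eta> \<delta>T \<delta>X \<and> pmap q \<eta> \<delta>T \<delta>X (a,b) = (a,b)"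
proof -
  define D where "D = hdelta \<eta> \<delta>T \<delta>X"
  define A where "A = Arat \<eta> \<delta>T \<delta>X"
  have kk: "int a \<le> min \<lfloor>A\<rfloor> (int q - 1) \<or> real a = A"
    "int b \<le> min (D - int \<eta> * int a) (int q) - 1 \<or> int b = D - int \<eta> * int a"
    using k by (auto simp: Kset_def AX_def A_def D_def)
  have aA: "real a \<le> A"
    using kk(1) by (auto simp: le_floor_iff)
  hence "real a \<le> real \<delta>X" using A_le by (simp add: A_def)
  hence "a \<le> \<delta>X" by simp
  moreover have "int \<eta> * int a + int b \<le> D" using kk(2) by auto
  ultimately have P: "(a,b) \<in> Pset \<eta> \<delta>T \<delta>X" by (simp add: Pset_iff D_def)
  have d: "(if a = 0 \<or> real a = A then a else redmod q a) = a"
  proof (cases "a = 0 \<or> real a = A")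
    case False
    hence "1 \<le> a" "a \<le> q - 1" using kk(1) by auto
    thus ?thesis using redmod_id[OF q2] False by simp
  qed simp
  have c: "(if b = 0 then 0 else if int b = D - int \<eta> * int a
      then nat (D - int \<eta> * int a) else redmod q b) = b"
  proof (cases "b = 0 \<or> int b = D - int \<eta> * int a")
    case False
    hence "1 \<le> b" "b \<le> q - 1" using kk(2) by auto
    thus ?thesis using redmod_id[OF q2] False by simp
  qed auto
  have "pmap q \<eta> \<delta>T \<delta>X (a,b) = (a,b)"
    unfolding pmap_simp Let_def D_def[symmetric] A_def[symmetric] d c by simp
  thus ?thesis using P by simp
qed

lemma sig_red: "q \<ge> 2 \<Longrightarrow> 1 \<le> n \<Longrightarrow> sig q (redmod q n) = sig q n"
  using redmod_props[of q n] redmod_id[of q "redmod q n"] by (auto simp: sig_def)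

lemma P2:
  assumes x: "(a,b) \<in> Pset \<eta> \<delta>T \<delta>X"
  shows "Pequiv TYPE('a::{finite,field}) \<eta> \<delta>T \<delta>X (a,b) (pmap CARD('a) \<eta> \<delta>T \<delta>X (a,b))"
proof -
  define q where "q = CARD('a)"
  have q2: "q \<ge> 2" unfolding q_def by (rule card_ge2)
  define D where "D = hdelta \<eta> \<delta>T \<delta>X"
  define A where "A = Arat \<eta> \<delta>T \<delta>X"
  define d' where "d' = (if a = 0 \<or> real a = A then a else redmod q a)"
  define c' where "c' = (if b = 0 then 0 else if int b = D - int \<eta> * int a
      then nat (D - int \<eta> * int d') else redmod q b)"
  have pm: "pmap q \<eta> \<delta>T \<delta>X (a,b) = (d', c')"
    by (simp add: pmap_simp d'_def c'_def D_def A_def Let_def)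
  have "(d',c') \<in> Kset q \<eta> \<delta>T \<delta>X" using P1[OF q2 x] pm by simp
  hence y: "(d',c') \<in> Pset \<eta> \<delta>T \<delta>X" using P4[OF q2] by blast
  have dle: "d' \<le> a" using dprime_le[OF q2] by (simp add: d'_def A_def)
  have xa: "int \<eta> * int a + int b \<le> D" "a \<le> \<delta>X" using x by (auto simp: Pset_iff D_def)
  have Dd: "D - int \<eta> * int d' \<ge> D - int \<eta> * int a" using dle by (simp add: mult_left_mono)
  have c1: "sig q a = sig q d'"
    using sig_red[OF q2, of a] by (cases "a = 0") (auto simp: d'_def)
  have c2: "a = \<delta>X \<longleftrightarrow> d' = \<delta>X"
  proof (cases "a = 0 \<or> real a = A")
    case True thus ?thesis by (simp add: d'_def)
  next
    case False
    have "a < \<delta>X"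
    proof (cases "\<delta>T \<ge> 0")
      case True thus ?thesis using False xa isA[OF x] by (auto simp: A_def)
    next
      case False thus ?thesis using lt_dX[OF _ x] by simp
    qed
    thus ?thesis using dle by simp
  qed
  have mod1: "(q - 1) dvd (a - d')"
    using redmod_dvd[OF q2, of a] by (cases "a = 0 \<or> real a = A") (auto simp: d'_def)
  have c3: "sig q b = sig q c'"
  proof (cases "b = 0")
    case True thus ?thesis by (simp add: c'_def sig_def)
  next
    case b0: False
    show ?thesis
    proof (cases "int b = D - int \<eta> * int a")
      case True
      hence c'e: "int c' = D - int \<eta> * int d'" using Dd by (simp add: c'_def b0)
      hence "int c' = int b + int \<eta> * (int a - int d')" using True by (simp add: algebra_simps)
      moreover have "int (a - d') = int a - int d'" using dle by simp
      ultimately have "int c' = int (b + \<eta> * (a - d'))" by simp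
      hence "c' = b + \<eta> * (a - d')" by (simp only: of_nat_eq_iff)
      hence "c' mod (q-1) = b mod (q-1)" using mod1 by (auto simp: mod_add_eq[symmetric])
      moreover have "c' \<noteq> 0" using \<open>c' = b + \<eta> * (a - d')\<close> b0 by simp
      ultimately show ?thesis using b0 redmod_eq_iff[OF q2] by (simp add: sig_def)
    next
      case False thus ?thesis using sig_red[OF q2, of b] b0 by (simp add: c'_def)
    qed
  qed
  have c4: "(D - int \<eta> * int a - int b = 0) \<longleftrightarrow> (D - int \<eta> * int d' - int c' = 0)"
  proof (cases "b = 0")
    case b0: True
    hence c'0: "c' = 0" by (simp add: c'_def)
    show ?thesis
    proof (cases "a = 0 \<or> real a = A")
      case True thus ?thesis using b0 c'0 by (simp add: d'_def)
    next
      case False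
      show ?thesis
      proof
        assume e: "D - int \<eta> * int a - int b = 0"
        have "\<delta>T \<ge> 0" using False isA[OF x] e b0 by (auto simp: A_def D_def split: if_splits)
        have aX: "a < \<delta>X" using False isA[OF x] \<open>\<delta>T \<ge> 0\<close> xa by (auto simp: A_def)
        have eq: "int \<eta> * int a = \<delta>T + int \<eta> * int \<delta>X" using e b0 by (simp add: D_def hdelta_def)
        have "\<eta> = 0"
        proof (rule ccontr)
          assume "\<eta> \<noteq> 0"
          hence "int \<eta> * int a < int \<eta> * int \<delta>X" using aX by simp
          thus False using eq \<open>\<delta>T \<ge> 0\<close> by simp
        qed
        thus "D - int \<eta> * int d' - int c' = 0" using e c'0 b0 by simp
      next
        assume e: "D - int \<eta> * int d' - int c' = 0"
        hence "D \<le> int \<eta> * int a" using c'0 Dd by simp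
        thus "D - int \<eta> * int a - int b = 0" using xa b0 by simp
      qed
    qed
  next
    case b0: False
    show ?thesis
    proof (cases "int b = D - int \<eta> * int a")
      case True
      hence "int c' = D - int \<eta> * int d'" using Dd by (simp add: c'_def b0)
      thus ?thesis using True by simp
    next
      case False
      hence c'e: "c' = redmod q b" using b0 by (simp add: c'_def)
      have "c' \<le> b" using redmod_le[OF q2, of b] b0 c'e by simp
      thus ?thesis using False xa Dd by auto
    qed
  qed
  show ?thesis
    unfolding q_def[symmetric] pm Pequiv_iff[OF x y, where 'a='a]
    using c1 c2 c3 c4 by (simp add: D_def q_def)
qed

lemma P3:
  assumes x: "(a,b) \<in> Pset \<eta> \<delta>T \<delta>X" and y: "(a',b') \<in> Pset \<eta> \<delta>T \<delta>X"
    and E: "Pequiv TYPE('a::{finite,field}) \<eta> \<delta>T \<delta>X (a,b) (a',b')"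
  shows "pmap CARD('a) \<eta> \<delta>T \<delta>X (a,b) = pmap CARD('a) \<eta> \<delta>T \<delta>X (a',b')"
proof -
  define q where "q = CARD('a)"
  have q2: "q \<ge> 2" unfolding q_def by (rule card_ge2)
  define D where "D = hdelta \<eta> \<delta>T \<delta>X"
  define A where "A = Arat \<eta> \<delta>T \<delta>X"
  have e: "(D - int \<eta> * int a - int b = 0) \<longleftrightarrow> (D - int \<eta> * int a' - int b' = 0)"
    "a = \<delta>X \<longleftrightarrow> a' = \<delta>X" "sig q b = sig q b'" "sig q a = sig q a'"
    using E unfolding Pequiv_iff[OF x y] by (simp_all add: D_def q_def)
  have z: "a = 0 \<longleftrightarrow> a' = 0" "b = 0 \<longleftrightarrow> b' = 0"
    using e(3,4) redmod_props(1)[OF q2, of a] redmod_props(1)[OF q2, of a']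
      redmod_props(1)[OF q2, of b] redmod_props(1)[OF q2, of b']
    by (auto simp: sig_def split: if_splits)
  have iA: "real a = A \<longleftrightarrow> real a' = A"
    using isA[OF x] isA[OF y] e(1,2) z(2) by (simp add: A_def D_def)
  have dd: "(if a = 0 \<or> real a = A then a else redmod q a) = (if a' = 0 \<or> real a' = A then a' else redmod q a')"
  proof (cases "a = 0 \<or> real a = A")
    case True
    thus ?thesis using z(1) iA by auto
  next
    case False
    thus ?thesis using z(1) iA e(4) by (auto simp: sig_def)
  qed
  have ib: "int b = D - int \<eta> * int a \<longleftrightarrow> int b' = D - int \<eta> * int a'" using e(1) by auto
  have cc: "(if b = 0 then 0 else if int b = D - int \<eta> * int a
      then nat (D - int \<eta> * int (if a = 0 \<or> real a = A then a else redmod q a)) else redmod q b) =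
      (if b' = 0 then 0 else if int b' = D - int \<eta> * int a'
      then nat (D - int \<eta> * int (if a' = 0 \<or> real a' = A then a' else redmod q a')) else redmod q b')"
    unfolding dd using z(2) ib e(3) by (auto simp: sig_def)
  show ?thesis unfolding q_def[symmetric] pmap_simp Let_def D_def[symmetric] A_def[symmetric]
    using dd cc by simp
qed

end

lemma Pequiv_refl: "Pequiv ty \<eta> \<delta>T \<delta>X x x"
  by (simp add: Pequiv_def mequiv_def)
lemma Pequiv_sym: "Pequiv ty \<eta> \<delta>T \<delta>X x y \<Longrightarrow> Pequiv ty \<eta> \<delta>T \<delta>X y x"
  by (simp add: Pequiv_def mequiv_def)
lemma Pequiv_trans: "Pequiv ty \<eta> \<delta>T \<delta>X x y \<Longrightarrow> Pequiv ty \<eta> \<delta>T \<delta>X y z \<Longrightarrow> Pequiv ty \<eta> \<delta>T \<delta>X x z"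
  by (simp add: Pequiv_def mequiv_def)

theorem proposition2p13:
  fixes \<eta> :: nat and \<delta>T :: int and \<delta>X :: nat
  assumes "\<delta>T + int \<eta> * int \<delta>X \<ge> 0"
  shows "((\<forall>x\<in>Pset \<eta> \<delta>T \<delta>X. \<forall>y\<in>Pset \<eta> \<delta>T \<delta>X.
            Pequiv TYPE('a::{finite,field}) \<eta> \<delta>T \<delta>X x y \<longrightarrow>
            pmap (CARD('a)) \<eta> \<delta>T \<delta>X x = pmap (CARD('a)) \<eta> \<delta>T \<delta>X y)
       \<and> bij_betw (\<lambda>C. the_elem (pmap (CARD('a)) \<eta> \<delta>T \<delta>X ` C))
           (Pset \<eta> \<delta>T \<delta>X // Prel TYPE('a) \<eta> \<delta>T \<delta>X) (Kset (CARD('a)) \<eta> \<delta>T \<delta>X))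
    \<and> (Kset (CARD('a)) \<eta> \<delta>T \<delta>X \<subseteq> Pset \<eta> \<delta>T \<delta>X
       \<and> (\<forall>x\<in>Pset \<eta> \<delta>T \<delta>X. \<exists>!k\<in>Kset (CARD('a)) \<eta> \<delta>T \<delta>X. Pequiv TYPE('a) \<eta> \<delta>T \<delta>X x k))
    \<and> (Delta (CARD('a)) \<eta> \<delta>T \<delta>X \<subseteq> bideg_monos \<eta> \<delta>T \<delta>X
       \<and> (\<forall>m\<in>bideg_monos \<eta> \<delta>T \<delta>X. \<exists>!d\<in>Delta (CARD('a)) \<eta> \<delta>T \<delta>X. mequiv TYPE('a) m d))"
  proof -
  let ?P = "Pset \<eta> \<delta>T \<delta>X"
  let ?K = "Kset (CARD('a)) \<eta> \<delta>T \<delta>X"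
  let ?p = "pmap (CARD('a)) \<eta> \<delta>T \<delta>X"
  let ?E = "Pequiv TYPE('a) \<eta> \<delta>T \<delta>X"
  let ?R = "Prel TYPE('a) \<eta> \<delta>T \<delta>X"
  have q2: "CARD('a) \<ge> 2" by (rule card_ge2)
  have p1: "\<And>x. x \<in> ?P \<Longrightarrow> ?p x \<in> ?K" using P1[OF assms q2] by auto
  have p2: "\<And>x. x \<in> ?P \<Longrightarrow> ?E x (?p x)" using P2[OF assms] by auto
  have p3: "\<And>x y. x \<in> ?P \<Longrightarrow> y \<in> ?P \<Longrightarrow> ?E x y \<Longrightarrow> ?p x = ?p y"
    using P3[OF assms] by auto
  have p4: "\<And>k. k \<in> ?K \<Longrightarrow> k \<in> ?P \<and> ?p k = k" using P4[OF assms q2] by auto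
  have KP: "?K \<subseteq> ?P" using p4 by auto
  have cls: "\<And>x. x \<in> ?P \<Longrightarrow> ?R `` {x} = {y \<in> ?P. ?E x y}"
    by (auto simp: Prel_def)
  have img: "\<And>x. x \<in> ?P \<Longrightarrow> ?p ` (?R `` {x}) = {?p x}"
  proof -
    fix x assume x: "x \<in> ?P"
    show "?p ` (?R `` {x}) = {?p x}"
      unfolding cls[OF x]
    proof
      show "?p ` {y \<in> ?P. ?E x y} \<subseteq> {?p x}" using p3[OF x] by auto
      show "{?p x} \<subseteq> ?p ` {y \<in> ?P. ?E x y}" using x Pequiv_refl by blast
    qed
  qed
  have bij: "bij_betw (\<lambda>C. the_elem (?p ` C)) (?P // ?R) ?K"
    unfolding bij_betw_def
  proof
    show "inj_on (\<lambda>C. the_elem (?p ` C)) (?P // ?R)"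
    proof (rule inj_onI)
      fix C1 C2 assume C1: "C1 \<in> ?P // ?R" and C2: "C2 \<in> ?P // ?R"
        and eq: "the_elem (?p ` C1) = the_elem (?p ` C2)"
      obtain x where x: "x \<in> ?P" "C1 = ?R `` {x}" using C1 by (auto elim: quotientE)
      obtain y where y: "y \<in> ?P" "C2 = ?R `` {y}" using C2 by (auto elim: quotientE)
      have "?p x = ?p y" using eq img x y by simp
      hence "?E x y" using p2[OF x(1)] p2[OF y(1)] Pequiv_sym Pequiv_trans by metis
      thus "C1 = C2" unfolding x(2) y(2) cls[OF x(1)] cls[OF y(1)]
        using Pequiv_sym Pequiv_trans by blast
    qed
    show "(\<lambda>C. the_elem (?p ` C)) ` (?P // ?R) = ?K"
    proof
      show "(\<lambda>C. the_elem (?p ` C)) ` (?P // ?R) \<subseteq> ?K"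
      proof
        fix k assume "k \<in> (\<lambda>C. the_elem (?p ` C)) ` (?P // ?R)"
        then obtain C where C: "C \<in> ?P // ?R" "k = the_elem (?p ` C)" by blast
        obtain x where x: "x \<in> ?P" "C = ?R `` {x}" using C(1) by (auto elim: quotientE)
        show "k \<in> ?K" using C(2) x img p1 by simp
      qed
      show "?K \<subseteq> (\<lambda>C. the_elem (?p ` C)) ` (?P // ?R)"
      proof
        fix k assume k: "k \<in> ?K"
        hence kP: "k \<in> ?P" "?p k = k" using p4 by auto
        have "?R `` {k} \<in> ?P // ?R" using kP(1) by (rule quotientI)
        moreover have "k = the_elem (?p ` (?R `` {k}))" using img[OF kP(1)] kP(2) by simp
        ultimately show "k \<in> (\<lambda>C. the_elem (?p ` C)) ` (?P // ?R)" by blast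
      qed
    qed
  qed
  have uniq: "\<forall>x\<in>?P. \<exists>!k\<in>?K. ?E x k"
  proof
    fix x assume x: "x \<in> ?P"
    show "\<exists>!k\<in>?K. ?E x k"
    proof (rule ex1I[where a="?p x"])
      show "?p x \<in> ?K \<and> ?E x (?p x)" using p1[OF x] p2[OF x] by simp
      fix k assume k: "k \<in> ?K \<and> ?E x k"
      hence "?p x = ?p k" using p3[OF x] KP by blast
      thus "k = ?p x" using p4 k by simp
    qed
  qed
  have DB: "Delta (CARD('a)) \<eta> \<delta>T \<delta>X \<subseteq> bideg_monos \<eta> \<delta>T \<delta>X"
  proof
    fix m assume "m \<in> Delta (CARD('a)) \<eta> \<delta>T \<delta>X"
    then obtain a b where ab: "(a,b) \<in> ?K" "m = Mmon \<eta> \<delta>T \<delta>X (a,b)" by (auto simp: Delta_def)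
    have "(a,b) \<in> ?P" using ab KP by auto
    hence "a \<le> \<delta>X" "int \<eta> * int a + int b \<le> hdelta \<eta> \<delta>T \<delta>X" by (auto simp: Pset_iff)
    thus "m \<in> bideg_monos \<eta> \<delta>T \<delta>X"
      unfolding ab(2) Mmon_eq bideg_monos_def by (simp add: hdelta_def of_nat_diff algebra_simps)
  qed
  have DU: "\<forall>m\<in>bideg_monos \<eta> \<delta>T \<delta>X. \<exists>!d\<in>Delta (CARD('a)) \<eta> \<delta>T \<delta>X. mequiv TYPE('a) m d"
  proof
    fix m assume m: "m \<in> bideg_monos \<eta> \<delta>T \<delta>X"
    obtain c1 c2 d1 d2 where mm: "m = (c1,c2,d1,d2)" by (cases m) auto
    have h: "int c1 + int c2 - int \<eta> * int d1 = \<delta>T" "d1 + d2 = \<delta>X" using m mm by (auto simp: bideg_monos_def)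
    have xP: "(d2,c2) \<in> ?P" using h by (auto simp: Pset_iff hdelta_def algebra_simps)
    have hd: "hdelta \<eta> \<delta>T \<delta>X - int \<eta> * int d2 - int c2 = int c1"
      using h by (auto simp: hdelta_def algebra_simps)
    have Mx: "Mmon \<eta> \<delta>T \<delta>X (d2,c2) = m" unfolding Mmon_eq hd mm using h by simp
    show "\<exists>!d\<in>Delta (CARD('a)) \<eta> \<delta>T \<delta>X. mequiv TYPE('a) m d"
    proof (rule ex1I[where a="Mmon \<eta> \<delta>T \<delta>X (?p (d2,c2))"])
      show "Mmon \<eta> \<delta>T \<delta>X (?p (d2,c2)) \<in> Delta (CARD('a)) \<eta> \<delta>T \<delta>X \<and>
            mequiv TYPE('a) m (Mmon \<eta> \<delta>T \<delta>X (?p (d2,c2)))"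
        using p1[OF xP] p2[OF xP] Mx by (auto simp: Delta_def Pequiv_def)
      fix d assume d: "d \<in> Delta (CARD('a)) \<eta> \<delta>T \<delta>X \<and> mequiv TYPE('a) m d"
      then obtain k where k: "k \<in> ?K" "d = Mmon \<eta> \<delta>T \<delta>X k" by (auto simp: Delta_def)
      have "?E (d2,c2) k" using d k Mx by (simp add: Pequiv_def)
      hence "?p (d2,c2) = ?p k" using p3[OF xP] KP k by blast
      thus "d = Mmon \<eta> \<delta>T \<delta>X (?p (d2,c2))" using p4 k by simp
    qed
  qed
  show ?thesis using p3 bij KP uniq DB DU by blast
qed

end
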